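(* Let $H$ be a Hilbert space and $L:H\to[0,\infty)$ be $C^2$. Let $c:[0,\infty)\to[0,\infty)$ be nonincreasing with $$c(r)\le\inf\Big\{\frac{|\nabla L(x)|}{\sqrt{L(x)}}:\ |x|\le r\Big\}\quad\text{for all }r\ge0$$ (with the convention $0/0=\infty$), and let $C(z)=\int_0^zc(v)\,dv$. If $(x_t)_{t\ge0}$ solves $\dot x(t)=-\nabla L(x(t))$, $x(0)=x_0$, then for all $t\ge0$, $$C\Big(|x_0|+\int_0^t|\dot x_s|\,ds\Big)+2\sqrt{L(x_t)}\le C(|x_0|)+2\sqrt{L(x_0)}.$$ In particular, if for some $R>0$ one has $C(R)>C(|x_0|)+2\sqrt{L(x_0)}$, then there is $x_\infty\in H$ with $|x_\infty|<R$, $L(x_\infty)=0$ and $x(t)\to x_\infty$; more precisely, for all $t\ge0$, $L(x(t))\le L(x_0)e^{-c(R)^2t}$ and $|x(t)-x_\infty|\le\frac{2\sqrt{L(x_0)}}{c(R)}e^{-c(R)^2t/2}$. *)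

theory Defs
  imports "HOL-Analysis.Analysis"
begin

end

theory Submission
  imports Defs "HOL-Analysis.Analysis" "HOL-Real_Asymp.Real_Asymp"
begin

lemma dini_aux:
  fixes f :: "real \<Rightarrow> real"
  assumes ab: "a \<le> b" and cont: "continuous_on {a..b} f"
    and H: "\<And>t e. t \<in> {a..<b} \<Longrightarrow> e > 0 \<Longrightarrow>
              \<exists>d>0. \<forall>u. t < u \<and> u < t + d \<and> u \<le> b \<longrightarrow> f u \<le> f t + e * (u - t)"
    and e: "e > 0"
  shows "f b \<le> f a + e * (b - a)"
proof -
  define S where "S = {t\<in>{a..b}. \<forall>s\<in>{a..t}. f s \<le> f a + e * (s - a)}"
  have aS: "a \<in> S" using ab by (auto simp: S_def)
  have bdd: "bdd_above S" by (auto simp: S_def bdd_above_def)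
  define m where "m = Sup S"
  have am: "a \<le> m" unfolding m_def using aS bdd by (meson cSup_upper)
  have mb: "m \<le> b" unfolding m_def using aS by (intro cSup_least) (auto simp: S_def)
  have below: "f s \<le> f a + e * (s - a)" if "s \<in> {a..<m}" for s
  proof -
    have "s < Sup S" using that m_def by auto
    then obtain t where "t \<in> S" "s < t" using less_cSup_iff[OF _ bdd] aS by blast
    then show ?thesis using that by (auto simp: S_def)
  qed
  have cl: "closed {s\<in>{a..b}. f s \<le> f a + e * (s - a)}"
    by (intro continuous_on_closed_Collect_le cont) (auto intro!: continuous_intros)
  have atm: "f m \<le> f a + e * (m - a)"
  proof (cases "a = m")
    case True then show ?thesis by simp
  next
    case False
    then have "a < m" using am by simp
    have "{a..<m} \<subseteq> {s\<in>{a..b}. f s \<le> f a + e * (s - a)}" using below mb by auto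
    then have "closure {a..<m} \<subseteq> {s\<in>{a..b}. f s \<le> f a + e * (s - a)}"
      using cl by (rule closure_minimal)
    moreover have "m \<in> closure {a..<m}" using \<open>a < m\<close> by simp
    ultimately show ?thesis by blast
  qed
  have mS: "\<forall>s\<in>{a..m}. f s \<le> f a + e * (s - a)"
    using below atm by (metis atLeastAtMost_iff atLeastLessThan_iff order_less_le)
  have "m = b"
  proof (rule ccontr)
    assume "m \<noteq> b"
    then have "m \<in> {a..<b}" using am mb by auto
    from H[OF this e] obtain d where d: "d > 0"
      and dH: "\<forall>u. m < u \<and> u < m + d \<and> u \<le> b \<longrightarrow> f u \<le> f m + e * (u - m)" by blast
    define t' where "t' = min (m + d/2) b"
    have "m < t'" using d \<open>m \<noteq> b\<close> mb by (auto simp: t'_def)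
    have "t' \<in> S"
      unfolding S_def
    proof (intro CollectI conjI ballI)
      show "t' \<in> {a..b}" using am \<open>m < t'\<close> by (auto simp: t'_def)
      fix s assume s: "s \<in> {a..t'}"
      show "f s \<le> f a + e * (s - a)"
      proof (cases "s \<le> m")
        case True then show ?thesis using mS s by auto
      next
        case False
        then have "f s \<le> f m + e * (s - m)" using dH s d by (auto simp: t'_def)
        then show ?thesis using atm by (simp add: algebra_simps)
      qed
    qed
    then have "t' \<le> m" unfolding m_def using bdd by (rule cSup_upper)
    then show False using \<open>m < t'\<close> by simp
  qed
  then show ?thesis using atm by simp
qed

lemma dini_mono:
  fixes f :: "real \<Rightarrow> real"
  assumes ab: "a \<le> b" and cont: "continuous_on {a..b} f"
    and H: "\<And>t e. t \<in> {a..<b} \<Longrightarrow> e > 0 \<Longrightarrow>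
              \<exists>d>0. \<forall>u. t < u \<and> u < t + d \<and> u \<le> b \<longrightarrow> f u \<le> f t + e * (u - t)"
  shows "f b \<le> f a"
proof (rule field_le_epsilon)
  fix e :: real assume e: "e > 0"
  have "f b \<le> f a + (e / (b - a + 1)) * (b - a)"
    using dini_aux[OF ab cont H, of "e / (b - a + 1)"] e ab by simp
  also have "\<dots> \<le> f a + e"
  proof -
    have "(e / (b - a + 1)) * (b - a) \<le> e" using e ab by (simp add: field_simps)
    then show ?thesis by simp
  qed
  finally show "f b \<le> f a + e" .
qed

lemma exp_decay_lim: "(q::real) > 0 \<Longrightarrow> ((\<lambda>t. exp (- q * t)) \<longlongrightarrow> 0) at_top"
  by real_asymp

lemma antimono_by_deriv:
  fixes f :: "real \<Rightarrow> real"
  assumes "a \<le> b" and "\<And>u. u \<in> {a..b} \<Longrightarrow> (f has_real_derivative f' u) (at u within {a..b})"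
    and "\<And>u. u \<in> {a..b} \<Longrightarrow> f' u \<le> 0"
  shows "f b \<le> f a"
proof -
  have "(f' has_integral (f b - f a)) {a..b}"
    using assms(1,2) by (intro fundamental_theorem_of_calculus)
      (auto simp: has_real_derivative_iff_has_vector_derivative)
  then have "((\<lambda>u. - f' u) has_integral - (f b - f a)) {a..b}"
    by (rule has_integral_neg)
  then have "0 \<le> - (f b - f a)" by (rule has_integral_nonneg) (use assms(3) in auto)
  then show ?thesis by simp
qed

locale flow =
  fixes L :: "'a::{real_inner,complete_space} \<Rightarrow> real" and G :: "'a \<Rightarrow> 'a" and x :: "real \<Rightarrow> 'a"
  assumes L_nonneg: "\<And>y. L y \<ge> 0"
    and L_grad: "\<And>y. (L has_derivative (\<lambda>h. inner (G y) h)) (at y)"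
    and G_cont: "continuous_on UNIV G"
    and ode: "\<And>t. t \<ge> 0 \<Longrightarrow> (x has_vector_derivative - G (x t)) (at t within {0..})"
begin

definition "g s = norm (G (x s))"
definition "ell t = integral {0..t} g"
definition "Lam t = L (x t)"

lemma g_nonneg: "g s \<ge> 0" by (simp add: g_def)

lemma x_cont: "continuous_on {0..} x"
  using ode has_vector_derivative_continuous continuous_on_eq_continuous_within by fastforce

lemma g_cont: "continuous_on {0..} g"
  unfolding g_def
  by (intro continuous_on_norm continuous_on_compose2[OF G_cont x_cont]) auto

lemma g_int: "0 \<le> a \<Longrightarrow> g integrable_on {a..b}"
  by (intro integrable_continuous_real continuous_on_subset[OF g_cont]) auto

lemma ell_split: "0 \<le> s \<Longrightarrow> s \<le> t \<Longrightarrow> ell t = ell s + integral {s..t} g"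
  unfolding ell_def using Henstock_Kurzweil_Integration.integral_combine[OF _ _ g_int, of 0 s t] by simp

lemma ell_nonneg: "0 \<le> t \<Longrightarrow> ell t \<ge> 0"
  unfolding ell_def by (intro integral_nonneg g_int) (auto simp: g_nonneg)

lemma ell_mono: "0 \<le> s \<Longrightarrow> s \<le> t \<Longrightarrow> ell s \<le> ell t"
  using ell_split[of s t] integral_nonneg[OF g_int, of s t] g_nonneg by force

lemma ell_0: "ell 0 = 0" by (simp add: ell_def)

lemma ell_deriv: "0 \<le> t \<Longrightarrow> (ell has_real_derivative g t) (at t within {t..t+1})"
proof -
  assume t: "0 \<le> t"
  have "continuous_on {0..t+1} g" by (rule continuous_on_subset[OF g_cont]) auto
  from integral_has_real_derivative[OF this, of t] t
  have "(ell has_real_derivative g t) (at t within {0..t+1})" by (simp add: ell_def[abs_def])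
  then show ?thesis by (rule DERIV_subset) (use t in auto)
qed

lemma ell_cont: "0 \<le> a \<Longrightarrow> continuous_on {a..b} ell"
proof -
  assume a: "0 \<le> a"
  have "continuous_on {0..b} ell" unfolding ell_def
    by (intro indefinite_integral_continuous_1 g_int) simp
  then show ?thesis by (rule continuous_on_subset) (use a in auto)
qed

lemma L_cont: "continuous_on UNIV L"
  using L_grad has_derivative_continuous continuous_at_imp_continuous_on by blast

lemma Lam_cont: "continuous_on {0..} Lam"
  unfolding Lam_def by (intro continuous_on_compose2[OF L_cont x_cont]) auto

lemma Lam_nonneg: "Lam t \<ge> 0" by (simp add: Lam_def L_nonneg)

lemma Lam_deriv: "0 \<le> t \<Longrightarrow> (Lam has_real_derivative (- ((g t) ^ 2))) (at t within {0..})"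
proof -
  assume t: "0 \<le> t"
  have "((L \<circ> x) has_derivative ((\<lambda>h. inner (G (x t)) h) \<circ> (\<lambda>h. h *\<^sub>R - G (x t)))) (at t within {0..})"
    by (rule diff_chain_within[OF ode[OF t, unfolded has_vector_derivative_def]])
       (rule has_derivative_at_withinI[OF L_grad])
  moreover have eq: "((\<lambda>h. inner (G (x t)) h) \<circ> (\<lambda>h. h *\<^sub>R - G (x t))) = (*) (- ((g t) ^ 2))"
    by (auto simp: g_def power2_norm_eq_inner algebra_simps fun_eq_iff)
  ultimately have "((L \<circ> x) has_derivative (*) (- ((g t) ^ 2))) (at t within {0..})"
    by metis
  then show ?thesis
    by (simp only: has_field_derivative_def Lam_def[abs_def] comp_def)
qed

lemma Lam_antimono: "0 \<le> s \<Longrightarrow> s \<le> t \<Longrightarrow> Lam t \<le> Lam s"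
  by (rule antimono_by_deriv[where f' = "\<lambda>u. - ((g u) ^ 2)"])
     (auto intro: DERIV_subset[OF Lam_deriv])

lemma grad_zero: assumes "L y = 0" shows "G y = 0"
proof -
  let ?f = "\<lambda>s::real. L (y + s *\<^sub>R G y)"
  have d1: "((\<lambda>s::real. y + s *\<^sub>R G y) has_derivative (\<lambda>h. h *\<^sub>R G y)) (at 0)"
    by (auto intro!: derivative_eq_intros)
  have "(L has_derivative (\<lambda>h. inner (G y) h)) (at ((\<lambda>s::real. y + s *\<^sub>R G y) 0))"
    using L_grad[of y] by simp
  from diff_chain_at[OF d1 this]
  have "((L \<circ> (\<lambda>s::real. y + s *\<^sub>R G y)) has_derivative ((\<lambda>h. inner (G y) h) \<circ> (\<lambda>h. h *\<^sub>R G y))) (at 0)" .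
  moreover have "((\<lambda>h. inner (G y) h) \<circ> (\<lambda>h. h *\<^sub>R G y)) = (*) (inner (G y) (G y))"
    by (auto simp: fun_eq_iff)
  ultimately have "((L \<circ> (\<lambda>s::real. y + s *\<^sub>R G y)) has_derivative (*) (inner (G y) (G y))) (at 0)"
    by metis
  then have "(?f has_real_derivative inner (G y) (G y)) (at 0)"
    by (simp only: has_field_derivative_def comp_def)
  then have "inner (G y) (G y) = 0"
    by (rule DERIV_local_min[of _ _ _ 1]) (use assms L_nonneg in auto)
  then show ?thesis by simp
qed

lemma displacement:
  assumes st: "0 \<le> s" "s \<le> t" shows "norm (x t - x s) \<le> ell t - ell s"
proof (cases "x t = x s")
  case True then show ?thesis using ell_mono[OF st] by simp
next
  case False
  define e where "e = (x t - x s) /\<^sub>R norm (x t - x s)"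
  have ne: "norm e = 1" using False by (simp add: e_def)
  have "((\<lambda>u. inner e (- G (x u))) has_integral (inner e (x t) - inner e (x s))) {s..t}"
  proof (rule fundamental_theorem_of_calculus[OF st(2)])
    fix u assume u: "u \<in> {s..t}"
    have "((\<lambda>u. inner e (x u)) has_vector_derivative inner e (- G (x u))) (at u within {0..})"
      by (rule bounded_linear.has_vector_derivative[OF bounded_linear_inner_right ode]) (use u st in auto)
    then show "((\<lambda>u. inner e (x u)) has_vector_derivative inner e (- G (x u))) (at u within {s..t})"
      by (rule has_vector_derivative_within_subset) (use st in auto)
  qed
  moreover have "(g has_integral integral {s..t} g) {s..t}"
    using g_int st by (simp add: integrable_integral)
  moreover have "inner e (- G (x u)) \<le> g u" for u
    using norm_cauchy_schwarz[of e "- G (x u)"] ne by (simp add: g_def)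
  ultimately have "inner e (x t) - inner e (x s) \<le> integral {s..t} g"
    by (rule has_integral_le)
  moreover have "inner e (x t) - inner e (x s) = norm (x t - x s)"
  proof -
    have "inner e (x t) - inner e (x s) = inner e (x t - x s)" by (simp add: inner_diff_right)
    also have "\<dots> = inner (x t - x s) (x t - x s) / norm (x t - x s)"
      unfolding e_def inner_scaleR_left by (simp add: divide_inverse mult.commute)
    also have "\<dots> = norm (x t - x s)"
      using False by (simp add: power2_norm_eq_inner[symmetric] power2_eq_square)
    finally show ?thesis .
  qed
  ultimately show ?thesis using ell_split[OF st] by simp
qed



lemma core:
  assumes t: "0 \<le> t" and a: "0 \<le> a" and ag: "a * sqrt (Lam t) \<le> g t" and e: "e > 0"
  shows "\<exists>d>0. \<forall>u. t < u \<and> u < t + d \<longrightarrow>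
           a * ell u + 2 * sqrt (Lam u) \<le> a * ell t + 2 * sqrt (Lam t) + e * (u - t)"
proof (cases "Lam t = 0")
  case True
  have "a * ell u + 2 * sqrt (Lam u) = a * ell t + 2 * sqrt (Lam t)" if u: "t < u" for u
  proof -
    have Lz: "Lam v = 0" if "t \<le> v" for v
      using Lam_antimono[OF t that] True Lam_nonneg[of v] by simp
    have gz: "g v = 0" if "v \<in> {t..u}" for v
      using grad_zero[of "x v"] Lz[of v] that by (simp add: g_def Lam_def)
    have "integral {t..u} g = integral {t..u} (\<lambda>_. 0::real)"
      by (rule integral_cong) (use gz in auto)
    then have "integral {t..u} g = 0" by simp
    then show ?thesis using ell_split[OF t, of u] u Lz[of u] True by simp
  qed
  then show ?thesis using e by (intro exI[of _ 1]) auto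
next
  case False
  then have Lp: "Lam t > 0" using Lam_nonneg[of t] by linarith
  define D where "D = a * g t - (g t)^2 / sqrt (Lam t)"
  have "a * g t * sqrt (Lam t) \<le> (g t)^2"
    using mult_left_mono[OF ag g_nonneg[of t]] by (simp add: power2_eq_square mult_ac)
  then have D: "D \<le> 0" using Lp by (simp add: D_def pos_le_divide_eq)
  have d1: "(ell has_real_derivative g t) (at t within {t..t+1})" by (rule ell_deriv[OF t])
  have d2: "((\<lambda>u. sqrt (Lam u)) has_real_derivative (inverse (sqrt (Lam t)) / 2 * (- ((g t)^2)))) (at t within {t..t+1})"
    by (rule DERIV_chain2[OF DERIV_real_sqrt[OF Lp] DERIV_subset[OF Lam_deriv[OF t]]]) (use t in auto)
  have "((\<lambda>u. a * ell u + 2 * sqrt (Lam u)) has_real_derivative (a * g t + 2 * (inverse (sqrt (Lam t)) / 2 * (- ((g t)^2))))) (at t within {t..t+1})"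
    by (intro DERIV_add DERIV_cmult d1 d2)
  moreover have "a * g t + 2 * (inverse (sqrt (Lam t)) / 2 * (- ((g t)^2))) = D"
    by (simp add: D_def field_simps)
  ultimately have dD: "((\<lambda>u. a * ell u + 2 * sqrt (Lam u)) has_real_derivative D) (at t within {t..t+1})"
    by simp
  define h where "h = (\<lambda>u. a * ell u + 2 * sqrt (Lam u))"
  have lim: "((\<lambda>u. (h u - h t) / (u - t)) \<longlongrightarrow> D) (at t within {t..t+1})"
    using dD unfolding has_field_derivative_iff h_def .
  have "eventually (\<lambda>u. dist ((h u - h t) / (u - t)) D < e) (at t within {t..t+1})"
    using tendsto_iff[THEN iffD1, OF lim, rule_format, OF e] .
  then obtain d where d: "d > 0"
    and dH: "\<forall>u\<in>{t..t+1}. u \<noteq> t \<and> dist u t < d \<longrightarrow> dist ((h u - h t) / (u - t)) D < e"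
    unfolding eventually_at by blast
  show ?thesis
  proof (intro exI[of _ "min d 1"] conjI allI impI)
    show "min d 1 > 0" using d by simp
    fix u assume u: "t < u \<and> u < t + min d 1"
    then have "dist ((h u - h t) / (u - t)) D < e" using dH by (auto simp: dist_real_def)
    then have "(h u - h t) / (u - t) < e" using D by (simp add: dist_real_def abs_less_iff)
    then have "h u - h t < e * (u - t)" using u by (simp add: pos_divide_less_eq)
    then show "a * ell u + 2 * sqrt (Lam u) \<le> a * ell t + 2 * sqrt (Lam t) + e * (u - t)"
      by (simp add: h_def)
  qed
qed

lemma sqrtLam_cont: "0 \<le> s \<Longrightarrow> continuous_on {s..T} (\<lambda>u. sqrt (Lam u))"
  by (intro continuous_on_compose2[OF continuous_on_real_sqrt continuous_on_subset[OF Lam_cont]]) auto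

lemma h_antimono:
  assumes a: "0 \<le> a" and ag: "\<And>u. 0 \<le> u \<Longrightarrow> a * sqrt (Lam u) \<le> g u" and s: "0 \<le> s" "s \<le> T"
  shows "a * ell T + 2 * sqrt (Lam T) \<le> a * ell s + 2 * sqrt (Lam s)"
proof (rule dini_mono[OF s(2), where f = "\<lambda>u. a * ell u + 2 * sqrt (Lam u)"])
  show "continuous_on {s..T} (\<lambda>u. a * ell u + 2 * sqrt (Lam u))"
    by (intro continuous_intros ell_cont sqrtLam_cont s)
  fix t e :: real assume "t \<in> {s..<T}" "0 < e"
  then show "\<exists>d>0. \<forall>u. t < u \<and> u < t + d \<and> u \<le> T \<longrightarrow>
      a * ell u + 2 * sqrt (Lam u) \<le> a * ell t + 2 * sqrt (Lam t) + e * (u - t)"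
    using core[of t a e] a ag[of t] s by auto
qed

lemma decay:
  assumes k: "\<And>u. 0 \<le> u \<Longrightarrow> k * sqrt (Lam u) \<le> g u" and k0: "0 \<le> k" and t: "0 \<le> t"
  shows "Lam t \<le> Lam 0 * exp (- k\<^sup>2 * t)"
proof -
  have "exp (k^2 * t) * Lam t \<le> exp (k^2 * 0) * Lam 0"
  proof (rule antimono_by_deriv[OF t, where f' = "\<lambda>u. exp (k^2 * u) * (k^2 * Lam u - (g u)^2)"])
    fix u assume u: "u \<in> {0..t}"
    have e1: "((\<lambda>u. exp (k^2 * u)) has_real_derivative exp (k^2 * u) * k^2) (at u within {0..t})"
      by (auto intro!: derivative_eq_intros)
    have e2: "(Lam has_real_derivative (- ((g u)^2))) (at u within {0..t})"
      by (rule DERIV_subset[OF Lam_deriv]) (use u in auto)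
    have "((\<lambda>u. exp (k^2 * u) * Lam u) has_real_derivative
            (exp (k^2 * u) * k^2) * Lam u + (- ((g u)^2)) * exp (k^2 * u)) (at u within {0..t})"
      by (rule DERIV_mult[OF e1 e2])
    then show "((\<lambda>u. exp (k^2 * u) * Lam u) has_real_derivative
            exp (k^2 * u) * (k^2 * Lam u - (g u)^2)) (at u within {0..t})"
      by (simp add: algebra_simps)
    have "(k * sqrt (Lam u))^2 \<le> (g u)^2"
      by (rule power_mono[OF k]) (use u k0 Lam_nonneg[of u] in auto)
    then have "k^2 * Lam u \<le> (g u)^2" using Lam_nonneg[of u] by (simp add: power_mult_distrib)
    then show "exp (k^2 * u) * (k^2 * Lam u - (g u)^2) \<le> 0"
      by (simp add: mult_nonneg_nonpos)
  qed
  then have "exp (k^2 * t) * Lam t \<le> Lam 0" by simp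
  then have "exp (- k\<^sup>2 * t) * (exp (k^2 * t) * Lam t) \<le> exp (- k\<^sup>2 * t) * Lam 0"
    by (intro mult_left_mono) auto
  then show ?thesis by (simp add: exp_minus field_simps)
qed

lemma decay_sqrt:
  assumes k: "\<And>u. 0 \<le> u \<Longrightarrow> k * sqrt (Lam u) \<le> g u" and k0: "0 \<le> k" and t: "0 \<le> t"
  shows "sqrt (Lam t) \<le> sqrt (Lam 0) * exp (- k\<^sup>2 * t / 2)"
proof -
  have "sqrt (Lam t) \<le> sqrt (Lam 0 * exp (- k\<^sup>2 * t))"
    using decay[OF k k0 t] by simp
  also have "sqrt (exp (- k\<^sup>2 * t)) = exp (- k\<^sup>2 * t / 2)"
    by (rule real_sqrt_unique) (simp_all add: power2_eq_square exp_add[symmetric])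
  then have "sqrt (Lam 0 * exp (- k\<^sup>2 * t)) = sqrt (Lam 0) * exp (- k\<^sup>2 * t / 2)"
    by (simp add: real_sqrt_mult)
  finally show ?thesis .
qed

end

theorem proposition2p2:
  fixes L :: "'a::{real_inner, complete_space} \<Rightarrow> real"
    and G :: "'a \<Rightarrow> 'a"
    and G' :: "'a \<Rightarrow> ('a \<Rightarrow>\<^sub>L 'a)"
    and c :: "real \<Rightarrow> real"
    and x :: "real \<Rightarrow> 'a"
    and x0 :: 'a
  assumes L_nonneg: "\<And>y. L y \<ge> 0"
    and L_grad: "\<And>y. (L has_derivative (\<lambda>h. inner (G y) h)) (at y)"
    and G_deriv: "\<And>y. (G has_derivative blinfun_apply (G' y)) (at y)"
    and G'_cont: "continuous_on UNIV G'"
    and c_nonneg: "\<And>r. r \<ge> 0 \<Longrightarrow> c r \<ge> 0"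
    and c_antimono: "\<And>r s. 0 \<le> r \<Longrightarrow> r \<le> s \<Longrightarrow> c s \<le> c r"
    and c_bound: "\<And>r y. r \<ge> 0 \<Longrightarrow> norm y \<le> r \<Longrightarrow> L y \<noteq> 0 \<Longrightarrow>
                    c r \<le> norm (G y) / sqrt (L y)"
    and ode: "\<And>t. t \<ge> 0 \<Longrightarrow> (x has_vector_derivative - G (x t)) (at t within {0..})"
    and init: "x 0 = x0"
  shows "(\<forall>t\<ge>0.
            integral {0..norm x0 + integral {0..t} (\<lambda>s. norm (vector_derivative x (at s within {0..})))} c
              + 2 * sqrt (L (x t))
            \<le> integral {0..norm x0} c + 2 * sqrt (L x0))
         \<and> (\<forall>R>0. integral {0..R} c > integral {0..norm x0} c + 2 * sqrt (L x0) \<longrightarrow>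
              (\<exists>xinf. norm xinf < R \<and> L xinf = 0 \<and> (x \<longlongrightarrow> xinf) at_top \<and>
                 (\<forall>t\<ge>0. L (x t) \<le> L x0 * exp (- (c R)\<^sup>2 * t) \<and>
                         c R * dist (x t) xinf \<le> 2 * sqrt (L x0) * exp (- (c R)\<^sup>2 * t / 2))))"
proof -
  have Gc: "continuous_on UNIV G"
    using G_deriv has_derivative_continuous continuous_at_imp_continuous_on by blast
  interpret F: flow L G x using L_nonneg L_grad Gc ode by unfold_locales auto
  define C where "C z = integral {0..z} c" for z
  have c_int: "c integrable_on {a..b}" if a: "0 \<le> a" for a b
  proof -
    have "mono_on {a..b} (\<lambda>v. - c v)"
      by (rule mono_onI) (use a c_antimono in auto)
    then have "(\<lambda>v. - c v) integrable_on {a..b}" by (rule integrable_on_mono_on)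
    then have "(\<lambda>v. - (- c v)) integrable_on {a..b}" by (rule integrable_neg)
    then show ?thesis by simp
  qed
  have C_split: "C b = C a + integral {a..b} c" if "0 \<le> a" "a \<le> b" for a b
    unfolding C_def using Henstock_Kurzweil_Integration.integral_combine[OF _ _ c_int, of 0 a b] that by simp
  have C_diff: "C b - C a \<le> c a * (b - a)" if ab: "0 \<le> a" "a \<le> b" for a b
  proof -
    have "integral {a..b} c \<le> integral {a..b} (\<lambda>_. c a)"
      by (rule integral_le[OF c_int]) (use ab c_antimono in auto)
    then show ?thesis using C_split[OF ab] ab by (simp add: mult.commute)
  qed
  have C_mono: "C a \<le> C b" if ab: "0 \<le> a" "a \<le> b" for a b
  proof -
    have "0 \<le> integral {a..b} c"
      by (rule integral_nonneg[OF c_int]) (use ab c_nonneg in auto)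
    then show ?thesis using C_split[OF ab] by simp
  qed
  have C_cont: "continuous_on {0..M} C" for M
    unfolding C_def[abs_def] by (rule indefinite_integral_continuous_1[OF c_int]) simp
  define r where "r t = norm x0 + F.ell t" for t
  have r_nonneg: "0 \<le> t \<Longrightarrow> 0 \<le> r t" for t using F.ell_nonneg by (simp add: r_def add_nonneg_nonneg)
  have normx: "norm (x t) \<le> r t" if t: "0 \<le> t" for t
  proof -
    have "norm (x t) \<le> norm x0 + norm (x t - x 0)"
      using norm_triangle_ineq[of x0 "x t - x0"] init by simp
    then show ?thesis using F.displacement[OF order_refl t] F.ell_0 by (simp add: r_def)
  qed
  have cgen: "c \<rho> * sqrt (F.Lam u) \<le> F.g u" if "0 \<le> \<rho>" "norm (x u) \<le> \<rho>" for \<rho> u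
  proof (cases "F.Lam u = 0")
    case True then show ?thesis using F.g_nonneg[of u] by simp
  next
    case False
    then have p: "sqrt (F.Lam u) > 0" using F.Lam_nonneg[of u] by simp
    have "c \<rho> \<le> F.g u / sqrt (F.Lam u)"
      using c_bound[OF that] False by (simp add: F.Lam_def F.g_def)
    then show ?thesis using p by (simp add: pos_le_divide_eq)
  qed
  have vd: "integral {0..t} (\<lambda>s. norm (vector_derivative x (at s within {0..}))) = F.ell t" for t
  proof -
    have "integral {0..t} (\<lambda>s. norm (vector_derivative x (at s within {0..}))) = integral {0..t} F.g"
    proof (rule integral_cong)
      fix s assume s: "s \<in> {0..t}"
      have "at s within {s..s+1} \<noteq> bot" using at_within_Icc_at_right[of s "s+1"] by simp
      moreover have "at s within {s..s+1} \<le> at s within {0..}" by (rule at_le) (use s in auto)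
      ultimately have nb: "at s within {0..} \<noteq> bot" by (metis bot.extremum_uniqueI)
      have "vector_derivative x (at s within {0..}) = - G (x s)"
        by (rule vector_derivative_within[OF nb ode]) (use s in auto)
      then show "norm (vector_derivative x (at s within {0..})) = F.g s" by (simp add: F.g_def)
    qed
    then show ?thesis by (simp add: F.ell_def)
  qed
  have P1: "C (r t) + 2 * sqrt (F.Lam t) \<le> C (norm x0) + 2 * sqrt (L x0)" if t: "0 \<le> t" for t
  proof -
    have "C (r t) + 2 * sqrt (F.Lam t) \<le> C (r 0) + 2 * sqrt (F.Lam 0)"
    proof (rule dini_mono[OF t, where f = "\<lambda>u. C (r u) + 2 * sqrt (F.Lam u)"])
      have rc: "continuous_on {0..t} r" unfolding r_def[abs_def]
        by (intro continuous_intros F.ell_cont) simp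
      have "continuous_on {0..t} (\<lambda>u. C (r u))"
      proof (rule continuous_on_compose2[OF C_cont[of "r t"] rc])
        show "r ` {0..t} \<subseteq> {0..r t}"
          using r_nonneg F.ell_mono by (auto simp: r_def)
      qed
      moreover have "continuous_on {0..t} (\<lambda>u. sqrt (F.Lam u))" by (rule F.sqrtLam_cont) simp
      ultimately show "continuous_on {0..t} (\<lambda>u. C (r u) + 2 * sqrt (F.Lam u))"
        by (intro continuous_on_add continuous_on_mult[OF continuous_on_const])
    next
      fix u e :: real assume u: "u \<in> {0..<t}" and e: "0 < e"
      have u0: "0 \<le> u" using u by simp
      obtain d where d: "d > 0" and dH: "\<forall>v. u < v \<and> v < u + d \<longrightarrow>
           c (r u) * F.ell v + 2 * sqrt (F.Lam v) \<le> c (r u) * F.ell u + 2 * sqrt (F.Lam u) + e * (v - u)"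
        using F.core[OF u0 c_nonneg[OF r_nonneg[OF u0]] cgen[OF r_nonneg[OF u0] normx[OF u0]] e] by blast
      show "\<exists>d>0. \<forall>v. u < v \<and> v < u + d \<and> v \<le> t \<longrightarrow>
              C (r v) + 2 * sqrt (F.Lam v) \<le> C (r u) + 2 * sqrt (F.Lam u) + e * (v - u)"
      proof (intro exI[of _ d] conjI allI impI)
        show "d > 0" by (rule d)
        fix v assume v: "u < v \<and> v < u + d \<and> v \<le> t"
        have "C (r v) - C (r u) \<le> c (r u) * (r v - r u)"
          by (rule C_diff) (use r_nonneg[OF u0] F.ell_mono[of u v] u0 v in \<open>auto simp: r_def\<close>)
        moreover have "c (r u) * (r v - r u) = c (r u) * F.ell v - c (r u) * F.ell u"
          by (simp add: r_def algebra_simps)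
        ultimately show "C (r v) + 2 * sqrt (F.Lam v) \<le> C (r u) + 2 * sqrt (F.Lam u) + e * (v - u)"
          using dH v by smt
      qed
    qed
    then show ?thesis by (simp add: r_def F.ell_0 F.Lam_def init)
  qed
  show ?thesis
  proof (intro conjI allI impI)
    fix t :: real assume t: "0 \<le> t"
    show "integral {0..norm x0 + integral {0..t} (\<lambda>s. norm (vector_derivative x (at s within {0..})))} c
              + 2 * sqrt (L (x t)) \<le> integral {0..norm x0} c + 2 * sqrt (L x0)"
      using P1[OF t] by (simp add: vd r_def C_def F.Lam_def)
  next
    fix R :: real assume R: "R > 0"
      and CR: "integral {0..R} c > integral {0..norm x0} c + 2 * sqrt (L x0)"
    define K where "K = C (norm x0) + 2 * sqrt (L x0)"
    have CRK: "C R > K" using CR by (simp add: K_def C_def)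
    have CrK: "C (r t) \<le> K" if "0 \<le> t" for t
    proof -
      have "0 \<le> sqrt (F.Lam t)" using F.Lam_nonneg by simp
      then show ?thesis using P1[OF that] unfolding K_def by linarith
    qed
    have rR: "r t < R" if t: "0 \<le> t" for t
    proof (rule ccontr)
      assume "\<not> r t < R"
      then have "C R \<le> C (r t)" using C_mono[of R "r t"] R by simp
      then show False using CrK[OF t] CRK by simp
    qed
    define \<eta> where "\<eta> = C R - K"
    have eta: "\<eta> > 0" using CRK by (simp add: \<eta>_def)
    have ceta: "c (r t) * (R - r t) \<ge> \<eta>" if t: "0 \<le> t" for t
      using C_diff[of "r t" R] r_nonneg[OF t] rR[OF t] CrK[OF t] by (simp add: \<eta>_def)
    define \<delta> where "\<delta> = \<eta> / R"
    have delta: "\<delta> > 0" using eta R by (simp add: \<delta>_def)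
    have cdelta: "\<delta> \<le> c (r t)" if t: "0 \<le> t" for t
    proof -
      have "c (r t) * (R - r t) \<le> c (r t) * R"
        using c_nonneg[OF r_nonneg[OF t]] r_nonneg[OF t] by (intro mult_left_mono) auto
      then have "\<eta> \<le> c (r t) * R" using ceta[OF t] by simp
      then show ?thesis using R by (simp add: \<delta>_def pos_divide_le_eq)
    qed
    have kdelta: "\<delta> * sqrt (F.Lam u) \<le> F.g u" if u: "0 \<le> u" for u
    proof -
      have "\<delta> * sqrt (F.Lam u) \<le> c (r u) * sqrt (F.Lam u)"
        by (rule mult_right_mono[OF cdelta[OF u]]) (simp add: F.Lam_nonneg)
      then show ?thesis using cgen[OF r_nonneg[OF u] normx[OF u]] by simp
    qed
    have cR0: "0 \<le> c R" using c_nonneg R by simp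
    have kR: "c R * sqrt (F.Lam u) \<le> F.g u" if u: "0 \<le> u" for u
      using cgen[of R u] R normx[OF u] rR[OF u] by simp
    have tail: "k * (F.ell T - F.ell t) \<le> 2 * sqrt (F.Lam t)"
      if k: "0 \<le> k" "\<And>u. 0 \<le> u \<Longrightarrow> k * sqrt (F.Lam u) \<le> F.g u" and tT: "0 \<le> t" "t \<le> T" for k t T
    proof -
      have "0 \<le> sqrt (F.Lam T)" using F.Lam_nonneg by simp
      moreover have "k * (F.ell T - F.ell t) = k * F.ell T - k * F.ell t" by (simp add: right_diff_distrib)
      ultimately show ?thesis using F.h_antimono[OF k tT] by linarith
    qed
    define B where "B t = 2 * sqrt (L x0) / \<delta> * exp (- \<delta>\<^sup>2 * t / 2)" for t
    have disp: "norm (x T - x t) \<le> B t" if tT: "0 \<le> t" "t \<le> T" for t T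
    proof -
      have "\<delta> * norm (x T - x t) \<le> \<delta> * (F.ell T - F.ell t)"
        using F.displacement[OF tT] delta by simp
      also have "\<dots> \<le> 2 * sqrt (F.Lam t)" by (rule tail[OF _ kdelta tT]) (use delta in auto)
      also have "\<dots> \<le> 2 * (sqrt (L x0) * exp (- \<delta>\<^sup>2 * t / 2))"
        using F.decay_sqrt[OF kdelta _ tT(1)] delta by (simp add: F.Lam_def init)
      finally show ?thesis using delta by (simp add: B_def field_simps)
    qed
    have Blim: "(B \<longlongrightarrow> 0) at_top"
    proof -
      have "((\<lambda>t. exp (- (\<delta>\<^sup>2 / 2) * t)) \<longlongrightarrow> 0) at_top"
        by (rule exp_decay_lim) (use delta in simp)
      then have "((\<lambda>t. 2 * sqrt (L x0) / \<delta> * exp (- (\<delta>\<^sup>2 / 2) * t)) \<longlongrightarrow> 2 * sqrt (L x0) / \<delta> * 0) at_top"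
        by (rule tendsto_mult_left)
      then show ?thesis by (simp add: B_def[abs_def])
    qed
    define X where "X n = x (real n)" for n
    have "Cauchy X"
      unfolding Cauchy_def
    proof (intro allI impI)
      fix e :: real assume e: "e > 0"
      have "eventually (\<lambda>t. B t < e / 2) at_top"
        using order_tendstoD(2)[OF Blim, of "e/2"] e by simp
      then obtain N where N: "\<And>t. t \<ge> N \<Longrightarrow> B t < e / 2" by (auto simp: eventually_at_top_linorder)
      define M where "M = nat \<lceil>max N 0\<rceil>"
      have MN: "real M \<ge> N" "real M \<ge> 0" by (auto simp: M_def) linarith
      show "\<exists>M. \<forall>m\<ge>M. \<forall>n\<ge>M. dist (X m) (X n) < e"
      proof (intro exI[of _ M] allI impI)
        fix m n assume m: "m \<ge> M" and n: "n \<ge> M"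
        have "dist (X m) (X n) \<le> dist (X m) (x (real M)) + dist (X n) (x (real M))"
          by (rule dist_triangle2)
        also have "\<dots> = norm (X m - x (real M)) + norm (X n - x (real M))" by (simp add: dist_norm)
        also have "\<dots> \<le> B (real M) + B (real M)"
          using disp[of "real M" "real m"] disp[of "real M" "real n"] m n MN by (simp add: X_def)
        also have "\<dots> < e" using N[OF MN(1)] by simp
        finally show "dist (X m) (X n) < e" .
      qed
    qed
    then obtain xinf where Xlim: "X \<longlonglongrightarrow> xinf"
      using Cauchy_convergent convergent_def by blast
    have bound: "norm (x t - xinf) \<le> B t" if t: "0 \<le> t" for t
    proof -
      have "(\<lambda>n. norm (X n - x t)) \<longlonglongrightarrow> norm (xinf - x t)"
        by (intro tendsto_intros Xlim)
      moreover have "\<forall>n\<ge>nat \<lceil>t\<rceil>. norm (X n - x t) \<le> B t"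
        using disp t by (auto simp: X_def)
      ultimately have "norm (xinf - x t) \<le> B t" by (rule Lim_bounded)
      then show ?thesis by (simp add: norm_minus_commute)
    qed
    have conv: "(x \<longlongrightarrow> xinf) at_top"
    proof -
      have "((\<lambda>t. x t - xinf) \<longlongrightarrow> 0) at_top"
      proof (rule Lim_null_comparison[OF _ Blim])
        show "eventually (\<lambda>t. norm (x t - xinf) \<le> B t) at_top"
          using bound by (auto simp: eventually_at_top_linorder intro!: exI[of _ 0])
      qed
      then show ?thesis by (simp add: Lim_null[symmetric])
    qed
    have c0: "c 0 > 0" using cdelta[of 0] delta r_nonneg[of 0] c_antimono[of 0 "r 0"] by simp
    define \<rho> where "\<rho> = R - \<eta> / c 0"
    have rho: "\<rho> < R" using eta c0 by (simp add: \<rho>_def)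
    have rrho: "r t \<le> \<rho>" if t: "0 \<le> t" for t
    proof -
      have "c (r t) \<le> c 0" using c_antimono[OF order_refl r_nonneg[OF t]] .
      then have "c (r t) * (R - r t) \<le> c 0 * (R - r t)"
        using rR[OF t] by (intro mult_right_mono) auto
      then have "\<eta> \<le> c 0 * (R - r t)" using ceta[OF t] by simp
      then have "\<eta> / c 0 \<le> R - r t" using c0 by (simp add: pos_divide_le_eq mult.commute)
      then show ?thesis by (simp add: \<rho>_def)
    qed
    have nxinf: "norm xinf \<le> \<rho>"
    proof -
      have "(\<lambda>n. norm (X n)) \<longlonglongrightarrow> norm xinf" by (intro tendsto_intros Xlim)
      moreover have "\<forall>n\<ge>0. norm (X n) \<le> \<rho>"
      proof (intro allI impI)
        fix n :: nat
        have "norm (x (real n)) \<le> \<rho>" using normx[of "real n"] rrho[of "real n"] by linarith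
        then show "norm (X n) \<le> \<rho>" by (simp only: X_def)
      qed
      ultimately show ?thesis by (rule Lim_bounded)
    qed
    have Lxinf: "L xinf = 0"
    proof -
      have "isCont L xinf" using has_derivative_continuous[OF L_grad[of xinf]] by simp
      then have l1: "(\<lambda>n. L (X n)) \<longlonglongrightarrow> L xinf" using Xlim by (rule isCont_tendsto_compose)
      have ed: "((\<lambda>t. exp (- (\<delta>\<^sup>2) * t)) \<longlongrightarrow> 0) at_top"
        by (rule exp_decay_lim) (use delta in simp)
      have "(\<lambda>n. exp (- (\<delta>\<^sup>2) * real n)) \<longlonglongrightarrow> 0"
        using filterlim_compose[OF ed filterlim_real_sequentially] by simp
      then have lim0: "(\<lambda>n. L x0 * exp (- (\<delta>\<^sup>2) * real n)) \<longlonglongrightarrow> L x0 * 0"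
        by (rule tendsto_mult_left)
      have l2: "(\<lambda>n. L (X n)) \<longlonglongrightarrow> 0"
      proof (rule Lim_null_comparison[where g = "\<lambda>n. L x0 * exp (- (\<delta>\<^sup>2) * real n)"])
        show "eventually (\<lambda>n. norm (L (X n)) \<le> L x0 * exp (- (\<delta>\<^sup>2) * real n)) sequentially"
        proof (rule always_eventually, rule allI)
          fix n :: nat
          have "F.Lam (real n) \<le> F.Lam 0 * exp (- \<delta>\<^sup>2 * real n)"
            by (rule F.decay[OF kdelta]) (use delta in auto)
          then show "norm (L (X n)) \<le> L x0 * exp (- (\<delta>\<^sup>2) * real n)"
            using L_nonneg[of "X n"] by (simp add: X_def F.Lam_def init)
        qed
      next
        show "(\<lambda>n. L x0 * exp (- (\<delta>\<^sup>2) * real n)) \<longlonglongrightarrow> 0" using lim0 by simp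
      qed
      show ?thesis using LIMSEQ_unique[OF l1 l2] .
    qed
    show "\<exists>xinf. norm xinf < R \<and> L xinf = 0 \<and> (x \<longlongrightarrow> xinf) at_top \<and>
                 (\<forall>t\<ge>0. L (x t) \<le> L x0 * exp (- (c R)\<^sup>2 * t) \<and>
                         c R * dist (x t) xinf \<le> 2 * sqrt (L x0) * exp (- (c R)\<^sup>2 * t / 2))"
    proof (intro exI[of _ xinf] conjI allI impI)
      show "norm xinf < R" using nxinf rho by simp
      show "L xinf = 0" by (rule Lxinf)
      show "(x \<longlongrightarrow> xinf) at_top" by (rule conv)
      fix t :: real assume t: "0 \<le> t"
      show "L (x t) \<le> L x0 * exp (- (c R)\<^sup>2 * t)"
        using F.decay[OF kR cR0 t] by (simp add: F.Lam_def init)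
      have "(\<lambda>n. c R * norm (X n - x t)) \<longlonglongrightarrow> c R * norm (xinf - x t)"
        by (intro tendsto_intros Xlim)
      moreover have "\<forall>n\<ge>nat \<lceil>t\<rceil>. c R * norm (X n - x t) \<le> 2 * sqrt (L x0) * exp (- (c R)\<^sup>2 * t / 2)"
      proof (intro allI impI)
        fix n assume n: "n \<ge> nat \<lceil>t\<rceil>"
        then have tn: "t \<le> real n" by linarith
        have "c R * norm (X n - x t) \<le> c R * (F.ell (real n) - F.ell t)"
          using F.displacement[OF t tn] cR0 by (simp add: X_def mult_left_mono)
        also have "\<dots> \<le> 2 * sqrt (F.Lam t)" by (rule tail[OF cR0 kR t tn])
        also have "\<dots> \<le> 2 * (sqrt (L x0) * exp (- (c R)\<^sup>2 * t / 2))"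
          using F.decay_sqrt[OF kR cR0 t] by (simp add: F.Lam_def init)
        finally show "c R * norm (X n - x t) \<le> 2 * sqrt (L x0) * exp (- (c R)\<^sup>2 * t / 2)" by simp
      qed
      ultimately have "c R * norm (xinf - x t) \<le> 2 * sqrt (L x0) * exp (- (c R)\<^sup>2 * t / 2)"
        by (rule Lim_bounded)
      then show "c R * dist (x t) xinf \<le> 2 * sqrt (L x0) * exp (- (c R)\<^sup>2 * t / 2)"
        by (simp add: dist_norm norm_minus_commute)
    qed
  qed
qed

end
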